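(* Under the standing setting and assumptions (A1)–(A3) described in the context, assume $\mathcal A^\infty\cap\ker(\pi)=\{0\}$. Then $\mathcal R$ is upper semicontinuous at every point of $\mathcal X$.
   Context: Let $\mathcal X$ be a Hausdorff, first countable, locally convex topological vector space over $\mathbb R$, partially ordered by a partial order $\geq$ with positive cone $\mathcal X_+=\{X\in\mathcal X: X\geq 0\}$. Let $\mathcal M\subset\mathcal X$ be a vector subspace with $1<\dim\mathcal M<\infty$, carrying the relative topology, and let $\pi:\mathcal M\to\mathbb R$ be linear with $\ker(\pi)=\{Z\in\mathcal M:\pi(Z)=0\}$. Standing assumptions: (A1) there is $U\in\mathcal M\cap\mathcal X_+$ with $\pi(U)=1$; (A2) $\mathcal A\subsetneq\mathcal X$ is closed, contains $0$, and satisfies $\mathcal A+\mathcal X_+\subset\mathcal A$; (A3) the map $\rho(X)=\inf\{\pi(Z): Z\in\mathcal M,\ X+Z\in\mathcal A\}$ is finitely valued and continuous on $\mathcal X$. The optimal payoff map is $\mathcal R(X)=\{Z\in\mathcal M: X+Z\in\mathcal A,\ \pi(Z)=\rho(X)\}$. The asymptotic cone is $\mathcal A^\infty=\bigcap_{\varepsilon>0}\mathrm{cl}\{\lambda X:\lambda\in[0,\varepsilon],X\in\mathcal A\}$. $\mathcal R$ is upper semicontinuous at $X$ if for every open $\mathcal U\subset\mathcal M$ with $\mathcal R(X)\subset\mathcal U$ there is an open neighborhood $\mathcal U_X$ of $X$ with $\mathcal R(Y)\subset\mathcal U$ for all $Y\in\mathcal U_X$. *)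

theory Defs
  imports "HOL-Analysis.Analysis"
begin

text \<open>Hausdorff and first countability come from the type classes t2_space and
first_countable_topology; here we require that the topology is a vector topology
(continuous addition and scalar multiplication) which is locally convex.\<close>

definition locally_convex_tvs :: "('a::{real_vector,topological_space}) itself \<Rightarrow> bool" where
  "locally_convex_tvs _ \<longleftrightarrow>
     continuous_on UNIV (\<lambda>(x::'a, y::'a). x + y) \<and>
     continuous_on UNIV (\<lambda>(c::real, x::'a). c *\<^sub>R x) \<and>
     (\<forall>U::'a set. open U \<and> 0 \<in> U \<longrightarrow> (\<exists>V. open V \<and> convex V \<and> 0 \<in> V \<and> V \<subseteq> U))"

definition partial_order_rel :: "('a \<Rightarrow> 'a \<Rightarrow> bool) \<Rightarrow> bool" where
  "partial_order_rel ge \<longleftrightarrow> (\<forall>x. ge x x) \<and> (\<forall>x y. ge x y \<and> ge y x \<longrightarrow> x = y)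
     \<and> (\<forall>x y z. ge x y \<and> ge y z \<longrightarrow> ge x z)"

definition pos_cone :: "('a::real_vector \<Rightarrow> 'a \<Rightarrow> bool) \<Rightarrow> 'a set" where
  "pos_cone ge = {x. ge x 0}"

definition linear_on :: "'a::real_vector set \<Rightarrow> ('a \<Rightarrow> real) \<Rightarrow> bool" where
  "linear_on M \<pi> \<longleftrightarrow> (\<forall>x\<in>M. \<forall>y\<in>M. \<pi> (x + y) = \<pi> x + \<pi> y) \<and>
                      (\<forall>c. \<forall>x\<in>M. \<pi> (c *\<^sub>R x) = c * \<pi> x)"

definition rho :: "'a::real_vector set \<Rightarrow> ('a \<Rightarrow> real) \<Rightarrow> 'a set \<Rightarrow> 'a \<Rightarrow> real" where
  "rho M \<pi> A X = Inf {\<pi> Z | Z. Z \<in> M \<and> X + Z \<in> A}"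

definition rho_finite :: "'a::real_vector set \<Rightarrow> ('a \<Rightarrow> real) \<Rightarrow> 'a set \<Rightarrow> bool" where
  "rho_finite M \<pi> A \<longleftrightarrow> (\<forall>X. {\<pi> Z | Z. Z \<in> M \<and> X + Z \<in> A} \<noteq> {} \<and>
                                bdd_below {\<pi> Z | Z. Z \<in> M \<and> X + Z \<in> A})"

definition opt_payoff :: "'a::real_vector set \<Rightarrow> ('a \<Rightarrow> real) \<Rightarrow> 'a set \<Rightarrow> 'a \<Rightarrow> 'a set" where
  "opt_payoff M \<pi> A X = {Z \<in> M. X + Z \<in> A \<and> \<pi> Z = rho M \<pi> A X}"

definition asymptotic_cone :: "'a::{real_vector,topological_space} set \<Rightarrow> 'a set" where
  "asymptotic_cone A = (\<Inter>\<epsilon>\<in>{\<epsilon>::real. \<epsilon> > 0}. closure {l *\<^sub>R X | l X. l \<in> {0..\<epsilon>} \<and> X \<in> A})"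

definition usc_at :: "'a::topological_space set \<Rightarrow> ('a \<Rightarrow> 'a set) \<Rightarrow> 'a \<Rightarrow> bool" where
  "usc_at M R X \<longleftrightarrow> (\<forall>U. openin (top_of_set M) U \<and> R X \<subseteq> U \<longrightarrow>
      (\<exists>V. open V \<and> X \<in> V \<and> (\<forall>Y\<in>V. R Y \<subseteq> U)))"

end

theory Submission
  imports Defs
begin

lemma tvs_add:
  fixes f g :: "'b \<Rightarrow> 'a::{real_vector,topological_space}"
  assumes "locally_convex_tvs TYPE('a)" "(f \<longlongrightarrow> a) F" "(g \<longlongrightarrow> b) F"
  shows "((\<lambda>n. f n + g n) \<longlongrightarrow> a + b) F"
proof -
  have c: "continuous_on UNIV (\<lambda>(x::'a, y::'a). x + y)"
    using assms(1) unfolding locally_convex_tvs_def by blast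
  have "((\<lambda>n. (f n, g n)) \<longlongrightarrow> (a,b)) F" by (rule tendsto_Pair[OF assms(2,3)])
  from continuous_on_tendsto_compose[OF c this] show ?thesis by simp
qed

lemma tvs_scale:
  fixes g :: "'b \<Rightarrow> 'a::{real_vector,topological_space}"
  assumes "locally_convex_tvs TYPE('a)" "(f \<longlongrightarrow> a) F" "(g \<longlongrightarrow> b) F"
  shows "((\<lambda>n. f n *\<^sub>R g n) \<longlongrightarrow> a *\<^sub>R b) F"
proof -
  have c: "continuous_on UNIV (\<lambda>(c::real, x::'a). c *\<^sub>R x)"
    using assms(1) unfolding locally_convex_tvs_def by blast
  have "((\<lambda>n. (f n, g n)) \<longlongrightarrow> (a,b)) F" by (rule tendsto_Pair[OF assms(2,3)])
  from continuous_on_tendsto_compose[OF c this] show ?thesis by simp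
qed

lemma tvs_lincomb:
  fixes B :: "'a::{real_vector,topological_space} set"
  assumes "locally_convex_tvs TYPE('a)" "finite B" "\<And>b. b \<in> B \<Longrightarrow> ((\<lambda>n. c n b) \<longlongrightarrow> l b) F"
  shows "((\<lambda>n. \<Sum>b\<in>B. c n b *\<^sub>R b) \<longlongrightarrow> (\<Sum>b\<in>B. l b *\<^sub>R b)) F"
  using assms(2,3)
proof (induction B rule: finite_induct)
  case empty
  then show ?case by simp
next
  case (insert x B)
  have "((\<lambda>n. c n x *\<^sub>R x + (\<Sum>b\<in>B. c n b *\<^sub>R b)) \<longlongrightarrow> l x *\<^sub>R x + (\<Sum>b\<in>B. l b *\<^sub>R b)) F"
    by (rule tvs_add[OF assms(1) tvs_scale[OF assms(1)]]) (use insert in auto)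
  then show ?case using insert by simp
qed

lemma lin_sum:
  assumes "subspace M" "linear_on M \<pi>" "finite B" "B \<subseteq> M"
  shows "\<pi> (\<Sum>b\<in>B. c b *\<^sub>R b) = (\<Sum>b\<in>B. c b * \<pi> b)"
  using assms(3,4)
proof (induction B rule: finite_induct)
  case empty
  have "0 \<in> M" using assms(1) by (simp add: subspace_0)
  then have "\<pi> (0 *\<^sub>R 0) = 0 * \<pi> 0" using assms(2) unfolding linear_on_def by blast
  then show ?case by simp
next
  case (insert x B)
  have s: "(\<Sum>b\<in>B. c b *\<^sub>R b) \<in> M"
    using insert assms(1) by (intro subspace_sum) (auto intro: subspace_scale)
  have x: "x \<in> M" "c x *\<^sub>R x \<in> M" using insert assms(1) by (auto intro: subspace_scale)
  have "\<pi> (c x *\<^sub>R x + (\<Sum>b\<in>B. c b *\<^sub>R b)) = \<pi> (c x *\<^sub>R x) + \<pi> (\<Sum>b\<in>B. c b *\<^sub>R b)"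
    using assms(2) s x unfolding linear_on_def by blast
  also have "\<pi> (c x *\<^sub>R x) = c x * \<pi> x" using assms(2) x unfolding linear_on_def by blast
  finally show ?case using insert by simp
qed

lemma coord_sub:
  fixes c :: "nat \<Rightarrow> 'a \<Rightarrow> real"
  assumes "finite B" "\<And>n. (\<Sum>b\<in>B. \<bar>c n b\<bar>) \<le> K"
  obtains l r where "strict_mono r" "\<And>b. b \<in> B \<Longrightarrow> ((\<lambda>n. c (r n) b) \<longlongrightarrow> l b) sequentially"
proof -
  have bd: "bounded ((\<lambda>x. x k) ` range c)" if "k \<in> B" for k
  proof -
    have "\<bar>c n k\<bar> \<le> K" for n
    proof -
      have "\<bar>c n k\<bar> \<le> (\<Sum>b\<in>B. \<bar>c n b\<bar>)"
        using member_le_sum[of k B "\<lambda>b. \<bar>c n b\<bar>"] that assms(1) by auto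
      then show ?thesis using assms(2)[of n] by linarith
    qed
    then show ?thesis unfolding bounded_real by auto
  qed
  have "\<forall>\<delta>\<subseteq>B. \<exists>l. \<exists>r::nat\<Rightarrow>nat. strict_mono r \<and>
     (\<forall>\<epsilon>>0. eventually (\<lambda>n. \<forall>i\<in>\<delta>. dist (c (r n) i) (l i) < \<epsilon>) sequentially)"
    by (rule compact_lemma_general[where proj="\<lambda>x k. x k" and unproj=id and f=c and basis=B,
          OF assms(1) bd]) auto
  then obtain l r where lr: "strict_mono r"
    "\<forall>\<epsilon>>0. eventually (\<lambda>n. \<forall>i\<in>B. dist (c (r n) i) (l i) < \<epsilon>) sequentially"
    by blast
  show ?thesis
  proof (rule that[OF lr(1)])
    fix b assume "b \<in> B"
    show "((\<lambda>n. c (r n) b) \<longlongrightarrow> l b) sequentially"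
    proof (rule tendstoI)
      fix e :: real assume "0 < e"
      then show "eventually (\<lambda>n. dist (c (r n) b) (l b) < e) sequentially"
        using lr(2)[rule_format, OF \<open>0 < e\<close>] \<open>b \<in> B\<close> by (auto elim: eventually_mono)
    qed
  qed
qed


lemma core:
  fixes X :: "'a::{real_vector,t2_space,first_countable_topology}"
  assumes tvs: "locally_convex_tvs TYPE('a)"
    and B: "finite B" "independent B" "B \<subseteq> M" "span B = M" "subspace M"
    and lin: "linear_on M \<pi>" and clA: "closed A"
    and rc: "continuous_on UNIV (rho M \<pi> A)"
    and ker: "asymptotic_cone A \<inter> {Z \<in> M. \<pi> Z = 0} = {0}"
    and O: "open Op" and RX: "opt_payoff M \<pi> A X \<subseteq> Op"
    and Ylim: "Y \<longlonglongrightarrow> X" and Zin: "\<And>n. Z n \<in> opt_payoff M \<pi> A (Y n)"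
    and Zout: "\<And>n. Z n \<notin> Op"
    and c: "\<And>n. Z n = (\<Sum>b\<in>B. c n b *\<^sub>R b)"
  shows False
proof -
  have ZM: "Z n \<in> M" and YZA: "Y n + Z n \<in> A" and piZ: "\<pi> (Z n) = rho M \<pi> A (Y n)" for n
    using Zin[of n] unfolding opt_payoff_def by auto
  have rl: "((\<lambda>n. rho M \<pi> A (Y' n)) \<longlongrightarrow> rho M \<pi> A X) F" if "(Y' \<longlongrightarrow> X) F" for Y' and F :: "nat filter"
    using continuous_on_tendsto_compose[OF rc that] by simp
  have piZc: "\<pi> (Z n) = (\<Sum>b\<in>B. c n b * \<pi> b)" for n
    unfolding c by (rule lin_sum[OF B(5) lin B(1) B(3)])
  define N where "N n = (\<Sum>b\<in>B. \<bar>c n b\<bar>)" for n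
  have N0: "N n \<ge> 0" for n unfolding N_def by (simp add: sum_nonneg)
  show False
  proof (cases "\<exists>K. \<forall>n. N n \<le> K")
    case True
    then obtain K where K: "\<And>n. N n \<le> K" by blast
    obtain l r where r: "strict_mono r" and cl: "\<And>b. b \<in> B \<Longrightarrow> ((\<lambda>n. c (r n) b) \<longlongrightarrow> l b) sequentially"
      using coord_sub[of B c K] B(1) K unfolding N_def by blast
    define Zl where "Zl = (\<Sum>b\<in>B. l b *\<^sub>R b)"
    have Zr: "(\<lambda>n. Z (r n)) \<longlonglongrightarrow> Zl"
      unfolding c Zl_def by (rule tvs_lincomb[OF tvs B(1) cl])
    have Yr: "(\<lambda>n. Y (r n)) \<longlonglongrightarrow> X"
      using LIMSEQ_subseq_LIMSEQ[OF Ylim r] by (simp add: o_def)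
    have "X + Zl \<in> A"
      by (rule Lim_in_closed_set[OF clA _ _ tvs_add[OF tvs Yr Zr]]) (auto simp: YZA)
    moreover have "Zl \<in> M" unfolding Zl_def
      using B by (intro subspace_sum) (auto intro: subspace_scale)
    moreover have "\<pi> Zl = rho M \<pi> A X"
    proof -
      have "(\<lambda>n. \<pi> (Z (r n))) \<longlonglongrightarrow> (\<Sum>b\<in>B. l b * \<pi> b)"
        unfolding piZc by (intro tendsto_intros cl)
      moreover have "(\<lambda>n. \<pi> (Z (r n))) \<longlonglongrightarrow> rho M \<pi> A X"
        unfolding piZ by (rule rl[OF Yr])
      ultimately have "(\<Sum>b\<in>B. l b * \<pi> b) = rho M \<pi> A X" using LIMSEQ_unique by blast
      then show ?thesis unfolding Zl_def using lin_sum[OF B(5) lin B(1) B(3)] by simp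
    qed
    ultimately have "Zl \<in> Op" using RX unfolding opt_payoff_def by auto
    then have "eventually (\<lambda>n. Z (r n) \<in> Op) sequentially"
      using topological_tendstoD[OF Zr O(1)] by blast
    then show False using Zout by simp
  next
    case False
    have unb: "\<exists>n\<ge>m. N n > real m" for m
    proof -
      from False obtain n where n: "N n > real m + (\<Sum>i<m. N i)" by (meson not_le)
      have "n \<ge> m"
      proof (rule ccontr)
        assume "\<not> m \<le> n"
        then have "N n \<le> (\<Sum>i<m. N i)"
          using member_le_sum[of n "{..<m}" N] N0 by auto
        then show False using n by simp
      qed
      moreover have "(\<Sum>i<m. N i) \<ge> 0" using N0 by (simp add: sum_nonneg)
      ultimately show ?thesis using n by (intro exI[of _ n]) auto
    qed
    define s where "s m = (SOME n. n \<ge> m \<and> N n > real m)" for m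
    have s: "s m \<ge> m" "N (s m) > real m" for m
      using someI_ex[OF unb[of m]] unfolding s_def by auto
    have sl: "filterlim s sequentially sequentially"
      by (rule filterlim_at_top_mono[OF filterlim_ident]) (use s in auto)
    define w where "w n = (\<lambda>b. c (s n) b / N (s n))" for n
    have Npos: "N (s n) > 0" for n using s(2)[of n] by (meson of_nat_0_le_iff order_le_less_trans)
    have Nw: "(\<Sum>b\<in>B. \<bar>w n b\<bar>) = 1" for n
    proof -
      have "(\<Sum>b\<in>B. \<bar>w n b\<bar>) = (\<Sum>b\<in>B. \<bar>c (s n) b\<bar>) / N (s n)"
        unfolding w_def using Npos[of n] by (simp add: sum_divide_distrib)
      then show ?thesis using Npos[of n] unfolding N_def by simp
    qed
    obtain l r where r: "strict_mono r" and cl: "\<And>b. b \<in> B \<Longrightarrow> ((\<lambda>n. w (r n) b) \<longlongrightarrow> l b) sequentially"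
      using coord_sub[of B w 1, OF B(1)] Nw by (metis order_refl)
    define W where "W = (\<Sum>b\<in>B. l b *\<^sub>R b)"
    have Nl: "(\<Sum>b\<in>B. \<bar>l b\<bar>) = 1"
    proof -
      have "(\<lambda>n. (\<Sum>b\<in>B. \<bar>w (r n) b\<bar>)) \<longlonglongrightarrow> (\<Sum>b\<in>B. \<bar>l b\<bar>)"
        by (intro tendsto_intros cl)
      then show ?thesis unfolding Nw using LIMSEQ_const_iff by metis
    qed
    have "W \<noteq> 0"
    proof
      assume "W = 0"
      have "\<exists>b\<in>B. l b \<noteq> 0"
      proof (rule ccontr)
        assume "\<not> ?thesis"
        then have "(\<Sum>b\<in>B. \<bar>l b\<bar>) = 0" by simp
        then show False using Nl by simp
      qed
      then have "dependent B" using dependent_finite[OF B(1)] \<open>W = 0\<close> unfolding W_def by blast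
      then show False using B(2) by blast
    qed
    have WM: "W \<in> M" unfolding W_def
      using B by (intro subspace_sum) (auto intro: subspace_scale)
    define sr where "sr n = s (r n)" for n
    have srl: "filterlim sr sequentially sequentially"
      unfolding sr_def using filterlim_compose[OF sl filterlim_subseq[OF r]] by (simp add: o_def)
    have Ysr: "(\<lambda>n. Y (sr n)) \<longlonglongrightarrow> X"
      using filterlim_compose[OF Ylim srl] by (simp add: o_def)
    have Ninf: "filterlim (\<lambda>n. N (sr n)) at_top sequentially"
    proof (rule filterlim_at_top_mono[OF filterlim_real_sequentially])
      show "eventually (\<lambda>n. real n \<le> N (sr n)) sequentially"
      proof (rule always_eventually, rule allI)
        fix n
        have "real n \<le> real (r n)" using seq_suble[OF r, of n] by simp
        also have "\<dots> \<le> N (sr n)" using s(2)[of "r n"] unfolding sr_def by simp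
        finally show "real n \<le> N (sr n)" .
      qed
    qed
    define t where "t n = inverse (N (sr n))" for n
    have t0: "t \<longlonglongrightarrow> 0" unfolding t_def by (rule tendsto_inverse_0_at_top[OF Ninf])
    have tpos: "t n > 0" for n unfolding t_def sr_def using Npos by simp
    have tZ: "t n *\<^sub>R Z (sr n) = (\<Sum>b\<in>B. w (r n) b *\<^sub>R b)" for n
      unfolding c t_def w_def sr_def by (simp add: scaleR_sum_right divide_inverse mult.commute)
    have conv: "(\<lambda>n. t n *\<^sub>R (Y (sr n) + Z (sr n))) \<longlonglongrightarrow> W"
    proof -
      have "(\<lambda>n. t n *\<^sub>R Y (sr n) + t n *\<^sub>R Z (sr n)) \<longlonglongrightarrow> 0 *\<^sub>R X + W"
        unfolding tZ W_def
        by (rule tvs_add[OF tvs tvs_scale[OF tvs t0 Ysr] tvs_lincomb[OF tvs B(1) cl]])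
      then show ?thesis by (simp add: scaleR_right_distrib)
    qed
    have "W \<in> asymptotic_cone A"
      unfolding asymptotic_cone_def
    proof (rule INT_I)
      fix \<epsilon> :: real assume "\<epsilon> \<in> {\<epsilon>. \<epsilon> > 0}"
      then have e: "\<epsilon> > 0" by simp
      have ev: "eventually (\<lambda>n. t n < \<epsilon>) sequentially"
        using order_tendstoD(2)[OF t0 e] .
      show "W \<in> closure {l *\<^sub>R X | l X. l \<in> {0..\<epsilon>} \<and> X \<in> A}"
      proof (rule Lim_in_closed_set[OF closed_closure _ _ conv])
        show "eventually (\<lambda>n. t n *\<^sub>R (Y (sr n) + Z (sr n)) \<in> closure {l *\<^sub>R X | l X. l \<in> {0..\<epsilon>} \<and> X \<in> A}) sequentially"
        proof (rule eventually_mono[OF ev])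
          fix n assume "t n < \<epsilon>"
          then have tn: "t n \<in> {0..\<epsilon>}" using tpos[of n] by simp
          have "t n *\<^sub>R (Y (sr n) + Z (sr n)) \<in> {l *\<^sub>R X | l X. l \<in> {0..\<epsilon>} \<and> X \<in> A}"
            using tn YZA[of "sr n"] by blast
          then show "t n *\<^sub>R (Y (sr n) + Z (sr n)) \<in> closure {l *\<^sub>R X | l X. l \<in> {0..\<epsilon>} \<and> X \<in> A}"
            by (rule subsetD[OF closure_subset])
        qed
      qed simp
    qed
    moreover have "\<pi> W = 0"
    proof -
      have eq: "t n * \<pi> (Z (sr n)) = (\<Sum>b\<in>B. w (r n) b * \<pi> b)" for n
        unfolding piZc t_def w_def sr_def by (simp add: sum_distrib_left divide_inverse ac_simps)
      have "(\<lambda>n. t n * \<pi> (Z (sr n))) \<longlonglongrightarrow> (\<Sum>b\<in>B. l b * \<pi> b)"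
        unfolding eq by (intro tendsto_intros cl)
      moreover have "(\<lambda>n. t n * \<pi> (Z (sr n))) \<longlonglongrightarrow> 0 * rho M \<pi> A X"
        unfolding piZ by (intro tendsto_mult t0 rl[OF Ysr])
      ultimately have "(\<Sum>b\<in>B. l b * \<pi> b) = 0" using LIMSEQ_unique by fastforce
      then show ?thesis unfolding W_def using lin_sum[OF B(5) lin B(1) B(3)] by simp
    qed
    ultimately have "W \<in> {0}" using ker WM by blast
    then show False using \<open>W \<noteq> 0\<close> by simp
  qed
qed


theorem mainTheorem16:
  fixes ge :: "'a::{real_vector,t2_space,first_countable_topology} \<Rightarrow> 'a \<Rightarrow> bool"
    and M :: "'a set" and \<pi> :: "'a \<Rightarrow> real" and A :: "'a set"
  assumes "locally_convex_tvs TYPE('a)"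
    and "partial_order_rel ge"
    and "subspace M" and "1 < dim M" and "\<exists>B. finite B \<and> span B = M"
    and "linear_on M \<pi>"
    and A1: "\<exists>U\<in>M \<inter> pos_cone ge. \<pi> U = 1"
    and A2: "closed A" "A \<noteq> UNIV" "0 \<in> A" "\<forall>X\<in>A. \<forall>P\<in>pos_cone ge. X + P \<in> A"
    and A3: "rho_finite M \<pi> A" "continuous_on UNIV (rho M \<pi> A)"
    and "asymptotic_cone A \<inter> {Z \<in> M. \<pi> Z = 0} = {0}"
  shows "\<forall>X. usc_at M (opt_payoff M \<pi> A) X"
proof
  fix X :: 'a
  obtain B where B: "finite B" "span B = M" using assms(5) by blast
  obtain B0 where B0: "B0 \<subseteq> B" "independent B0" "B \<subseteq> span B0"
    using maximal_independent_subset[of B] by blast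
  have fB0: "finite B0" using B0(1) B(1) finite_subset by blast
  have sB0: "span B0 = M"
    using B0 B(2) by (metis span_mono span_span subset_antisym)
  have B0M: "B0 \<subseteq> M" using sB0 span_superset by blast
  show "usc_at M (opt_payoff M \<pi> A) X"
    unfolding usc_at_def
  proof (intro allI impI)
    fix U assume U: "openin (top_of_set M) U \<and> opt_payoff M \<pi> A X \<subseteq> U"
    obtain Op where Op: "open Op" "U = M \<inter> Op" using U openin_open by metis
    show "\<exists>V. open V \<and> X \<in> V \<and> (\<forall>Y\<in>V. opt_payoff M \<pi> A Y \<subseteq> U)"
    proof (rule ccontr)
      assume nv: "\<not> ?thesis"
      obtain Bs :: "nat \<Rightarrow> 'a set" where Bs: "\<And>i. open (Bs i)" "\<And>i. X \<in> Bs i"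
        "\<And>F. (\<forall>n. F n \<in> Bs n) \<Longrightarrow> F \<longlonglongrightarrow> X"
        by (rule first_countable_topology_class.countable_basis[of X]) auto
      have "\<forall>i. \<exists>Y Z. Y \<in> Bs i \<and> Z \<in> opt_payoff M \<pi> A Y \<and> Z \<notin> U"
      proof
        fix i
        from nv have "\<not> (\<forall>Y\<in>Bs i. opt_payoff M \<pi> A Y \<subseteq> U)" using Bs(1,2) by blast
        then show "\<exists>Y Z. Y \<in> Bs i \<and> Z \<in> opt_payoff M \<pi> A Y \<and> Z \<notin> U" by blast
      qed
      then obtain Y Z where YZ: "\<And>i. Y i \<in> Bs i" "\<And>i. Z i \<in> opt_payoff M \<pi> A (Y i)" "\<And>i. Z i \<notin> U"
        by metis
      have Zout: "Z i \<notin> Op" for i using YZ(2,3)[of i] Op(2) unfolding opt_payoff_def by auto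
      have "\<forall>n. \<exists>u. Z n = (\<Sum>v\<in>B0. u v *\<^sub>R v)"
      proof
        fix n
        have "Z n \<in> span B0" using YZ(2)[of n] sB0 unfolding opt_payoff_def by auto
        then show "\<exists>u. Z n = (\<Sum>v\<in>B0. u v *\<^sub>R v)" unfolding span_finite[OF fB0] by auto
      qed
      then obtain c where c: "\<And>n. Z n = (\<Sum>b\<in>B0. c n b *\<^sub>R b)" by metis
      have Ylim: "Y \<longlonglongrightarrow> X" using Bs(3) YZ(1) by blast
      have RX: "opt_payoff M \<pi> A X \<subseteq> Op" using U Op by auto
      show False
        by (rule core[OF assms(1) fB0 B0(2) B0M sB0 assms(3,6) A2(1) A3(2) assms(14) Op(1) RX
              Ylim YZ(2) Zout c])
    qed
  qed
qed

end
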